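(* Let $P$ be a matrix as in the context, with column index set $\mathcal{F}$. Let $A\subseteq\mathcal{F}$ with $|A|=r+1$, $\det(P_A)\neq0$ and $A\cap\mathcal{F}'=\emptyset$. Then one of the following holds: (i) $|A\cap\mathcal{F}_i|=1$ for all $i=0,\dots,r$, and $|\det(P_A)|=|\mu(j_0,\dots,j_r)|$ for some numbers $1\le j_i\le n_i$; (ii) there exist $0\le i_0,i_1\le r$ with $|A\cap\mathcal{F}_{i_0}|=2$, $|A\cap\mathcal{F}_{i_1}|=0$ and $|A\cap\mathcal{F}_i|=1$ for all other $i$, and $|\det(P_A)|=|\nu(i_0,j_{i_0},j'_{i_0})|\prod_{i\neq i_0,i_1}l_{ij_i}$ for some numbers $1\le j_i\le n_i$ and $1\le j'_{i_0}\le n_{i_0}$.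
   Context: Fix integers $r\ge1$, $n_0,\dots,n_r\ge1$, vectors $l_i\in\mathbb{Z}_{\ge1}^{n_i}$, $d_i\in\mathbb{Z}^{n_i}$ with $\gcd(l_{ij},d_{ij})=1$ and $d_{i1}/l_{i1}>\dots>d_{in_i}/l_{in_i}$. Let $e_1,\dots,e_{r+1}$ be the standard basis of $\mathbb{Z}^{r+1}$, $u=e_{r+1}$, $e_0=-(e_1+\dots+e_r)$, $v_{ij}=l_{ij}e_i+d_{ij}u$. Let $\mathcal{F}_i=\{f_{i1},\dots,f_{in_i}\}$, $\mathcal{F}'$ one of $\emptyset,\{f^+\},\{f^-\},\{f^+,f^-\}$ (types (ee),(pe),(ep),(pp)), $\mathcal{F}=\mathcal{F}_0\cup\dots\cup\mathcal{F}_r\cup\mathcal{F}'$, and $P$ the $(r+1)\times|\mathcal{F}|$ matrix with column $v_{ij}$ at $f_{ij}$, $u$ at $f^+$, $-u$ at $f^-$. For $|A|=r+1$, $P_A$ is the square submatrix of columns indexed by $A$. Define $\mu(j_0,\dots,j_r)=\sum_{i_0=0}^r d_{i_0j_{i_0}}\prod_{i\ne i_0}l_{ij_i}$ and $\nu(i,j,j')=l_{ij}d_{ij'}-l_{ij'}d_{ij}$. *)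

theory Defs
  imports Main "Jordan_Normal_Form.Determinant"
begin

text \<open>Column indices: Fc i j is f_{ij}; Fplus is f^+; Fminus is f^-.\<close>
datatype col = Fc nat nat | Fplus | Fminus

definition Fblock :: "(nat \<Rightarrow> nat) \<Rightarrow> nat \<Rightarrow> col set" where
  "Fblock n i = {Fc i j | j. 1 \<le> j \<and> j \<le> n i}"

definition Fset :: "nat \<Rightarrow> (nat \<Rightarrow> nat) \<Rightarrow> col set \<Rightarrow> col set" where
  "Fset r n F' = (\<Union>i\<le>r. Fblock n i) \<union> F'"

text \<open>Entry in row a (a = 0..r) of the column of P indexed by c.
  Rows 0..r-1 are the coordinates of e_1..e_r, row r is the coordinate of u = e_{r+1};
  e_0 = -(e_1+...+e_r).\<close>
fun Pcol :: "nat \<Rightarrow> (nat \<Rightarrow> nat \<Rightarrow> int) \<Rightarrow> (nat \<Rightarrow> nat \<Rightarrow> int) \<Rightarrow> col \<Rightarrow> nat \<Rightarrow> int" where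
  "Pcol r l d (Fc i j) a =
     (if a = r then d i j else if i = 0 then - l i j else if a + 1 = i then l i j else 0)"
| "Pcol r l d Fplus a = (if a = r then 1 else 0)"
| "Pcol r l d Fminus a = (if a = r then -1 else 0)"

text \<open>The square submatrix P_A, columns of A in some (arbitrary) order;
  its determinant is determined up to sign.\<close>
definition PA :: "nat \<Rightarrow> (nat \<Rightarrow> nat \<Rightarrow> int) \<Rightarrow> (nat \<Rightarrow> nat \<Rightarrow> int) \<Rightarrow> col set \<Rightarrow> int mat" where
  "PA r l d A = (let f = (SOME f. bij_betw f {..<Suc r} A) in
     mat (Suc r) (Suc r) (\<lambda>(a, b). Pcol r l d (f b) a))"

definition mu :: "nat \<Rightarrow> (nat \<Rightarrow> nat \<Rightarrow> int) \<Rightarrow> (nat \<Rightarrow> nat \<Rightarrow> int) \<Rightarrow> (nat \<Rightarrow> nat) \<Rightarrow> int" where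
  "mu r l d j = (\<Sum>i0\<in>{0..r}. d i0 (j i0) * (\<Prod>i\<in>{0..r} - {i0}. l i (j i)))"

definition nu :: "(nat \<Rightarrow> nat \<Rightarrow> int) \<Rightarrow> (nat \<Rightarrow> nat \<Rightarrow> int) \<Rightarrow> nat \<Rightarrow> nat \<Rightarrow> nat \<Rightarrow> int" where
  "nu l d i j j' = l i j * d i j' - l i j' * d i j"

end

theory Submission
  imports Defs
begin


lemma prod_list_diag: "prod_list (diag_mat A) = (\<Prod>i\<in>{0..<dim_row A}. A $$ (i,i))"
  unfolding diag_mat_def by (subst prod.distinct_set_conv_list[symmetric]) auto

lemma det_bordered:
  fixes M :: "int mat"
  assumes M: "M \<in> carrier_mat (Suc r) (Suc r)"
    and off: "\<And>a b. a < r \<Longrightarrow> b < r \<Longrightarrow> a \<noteq> b \<Longrightarrow> M $$ (a,b) = 0"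
    and dg: "\<And>a. a < r \<Longrightarrow> M $$ (a,a) \<noteq> 0"
  shows "det M = M $$ (r,r) * (\<Prod>a<r. M $$ (a,a))
     - (\<Sum>b<r. M $$ (b,r) * M $$ (r,b) * (\<Prod>a\<in>{..<r}-{b}. M $$ (a,a)))"
proof -
  define c0 where "c0 = (\<Prod>a<r. M $$ (a,a))"
  define w where "w c = - M $$ (r,c) * (\<Prod>a\<in>{..<r}-{c}. M $$ (a,a))" for c
  define E where "E = mat (Suc r) (Suc r) (\<lambda>(a,c). if a < r then (if a = c then 1 else 0)
      else (if c < r then w c else c0))"
  have c0nz: "c0 \<noteq> 0" unfolding c0_def using dg by (simp add: prod_zero_iff)
  have E: "E \<in> carrier_mat (Suc r) (Suc r)" unfolding E_def by simp
  have dE: "det E = c0"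
  proof -
    have "det E = prod_list (diag_mat E)"
      by (rule det_lower_triangular[OF _ E]) (auto simp: E_def)
    also have "\<dots> = (\<Prod>i\<in>{0..<Suc r}. E $$ (i,i))" by (simp add: prod_list_diag E_def)
    also have "\<dots> = c0" by (simp add: E_def atLeast0LessThan)
    finally show ?thesis .
  qed
  have prodrem: "M $$ (b,b) * (\<Prod>a\<in>{..<r}-{b}. M $$ (a,a)) = c0" if "b < r" for b
    unfolding c0_def using that by (simp add: prod.remove)
  have EMr: "(E * M) $$ (i,b) = (\<Sum>c<r. w c * M $$ (c,b)) + c0 * M $$ (r,b)"
    if "i = r" "b < Suc r" for i b
    using that M by (simp add: E_def scalar_prod_def times_mat_def atLeast0LessThan
        lessThan_Suc)
  have EMa: "(E * M) $$ (i,b) = M $$ (i,b)" if "i < r" "b < Suc r" for i b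
  proof -
    have "(E * M) $$ (i,b) = (\<Sum>c\<in>{0..<Suc r}. E $$ (i,c) * M $$ (c,b))"
      using that M by (simp add: E_def scalar_prod_def times_mat_def)
    also have "\<dots> = (\<Sum>c\<in>{0..<Suc r}. (if i = c then M $$ (c,b) else 0))"
      by (rule sum.cong) (use that in \<open>auto simp: E_def\<close>)
    also have "\<dots> = M $$ (i,b)" using that by (simp add: sum.delta)
    finally show ?thesis .
  qed
  have EMz: "(E * M) $$ (r,b) = 0" if "b < r" for b
  proof -
    have "(\<Sum>c<r. w c * M $$ (c,b)) = (\<Sum>c<r. if c = b then w b * M $$ (b,b) else 0)"
      by (rule sum.cong) (use off that in auto)
    also have "\<dots> = w b * M $$ (b,b)" using that by simp
    finally have s: "(\<Sum>c<r. w c * M $$ (c,b)) = w b * M $$ (b,b)" .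
    have "w b * M $$ (b,b) = - M $$ (r,b) * (M $$ (b,b) * (\<Prod>a\<in>{..<r}-{b}. M $$ (a,a)))"
      by (simp add: w_def algebra_simps)
    also have "\<dots> = - M $$ (r,b) * c0" using prodrem[OF that] by simp
    finally show ?thesis using EMr[of r b] that s by simp
  qed
  have EM: "E * M \<in> carrier_mat (Suc r) (Suc r)" using E M by simp
  have "det (E * M) = prod_list (diag_mat (E * M))"
  proof (rule det_upper_triangular[OF _ EM], unfold upper_triangular_def, intro allI impI)
    fix i j assume i: "i < dim_row (E * M)" and j: "j < i"
    hence ir: "i \<le> r" using EM by auto
    show "(E * M) $$ (i,j) = 0"
    proof (cases "i = r")
      case True thus ?thesis using EMz j by simp
    next
      case False thus ?thesis using EMa[of i j] off[of i j] ir j by simp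
    qed
  qed
  also have "\<dots> = (\<Prod>i\<in>{0..<Suc r}. (E * M) $$ (i,i))" using E by (simp add: prod_list_diag del: prod.op_ivl_Suc)
  also have "\<dots> = c0 * ((\<Sum>c<r. w c * M $$ (c,r)) + c0 * M $$ (r,r))"
    using EMa EMr[of r r] by (simp add: atLeast0LessThan lessThan_Suc c0_def mult.commute)
  finally have "c0 * det M = c0 * ((\<Sum>c<r. w c * M $$ (c,r)) + c0 * M $$ (r,r))"
    using det_mult[OF E M] dE by simp
  hence "det M = (\<Sum>c<r. w c * M $$ (c,r)) + c0 * M $$ (r,r)" using c0nz by simp
  thus ?thesis unfolding w_def c0_def
    by (simp add: algebra_simps sum_negf sum_distrib_left)
qed




definition H :: "nat \<Rightarrow> (nat\<Rightarrow>nat\<Rightarrow>int) \<Rightarrow> (nat\<Rightarrow>nat\<Rightarrow>int) \<Rightarrow> (nat \<Rightarrow> col) \<Rightarrow> int mat" where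
 "H r l d g = mat (Suc r) (Suc r) (\<lambda>(a,b). Pcol r l d (g b) a)"

lemma set_split0: "{0..r} = insert 0 (Suc ` {..<r})"
proof (rule Set.set_eqI)
  fix x show "x \<in> {0..r} \<longleftrightarrow> x \<in> insert 0 (Suc ` {..<r})" by (cases x) auto
qed

lemma prod_Suc_img: "(\<Prod>i\<in>Suc ` X. f i) = (\<Prod>a\<in>X. f (Suc a))"
  by (subst prod.reindex) auto

lemma comp_i:
  assumes nz: "\<forall>i\<in>{1..r}. l i (J i) \<noteq> 0"
  shows "det (H r l d (\<lambda>b. if b < r then Fc (b+1) (J (b+1)) else Fc 0 (J 0))) = mu r l d J"
proof -
  let ?M = "H r l d (\<lambda>b. if b < r then Fc (b+1) (J (b+1)) else Fc 0 (J 0))"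
  have "det ?M = ?M $$ (r,r) * (\<Prod>a<r. ?M $$ (a,a))
     - (\<Sum>b<r. ?M $$ (b,r) * ?M $$ (r,b) * (\<Prod>a\<in>{..<r}-{b}. ?M $$ (a,a)))"
    by (rule det_bordered) (use nz in \<open>auto simp: H_def\<close>)
  also have "\<dots> = d 0 (J 0) * (\<Prod>a<r. l (Suc a) (J (Suc a)))
     + (\<Sum>b<r. l 0 (J 0) * d (Suc b) (J (Suc b)) * (\<Prod>a\<in>{..<r}-{b}. l (Suc a) (J (Suc a))))"
    by (simp add: H_def sum_negf)
  also have "\<dots> = mu r l d J"
  proof -
    have fin: "finite (Suc ` {..<r})" by simp
    have n0: "0 \<notin> Suc ` {..<r}" by auto
    have "mu r l d J = d 0 (J 0) * (\<Prod>i\<in>Suc ` {..<r}. l i (J i))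
        + (\<Sum>i\<in>Suc ` {..<r}. d i (J i) * (\<Prod>i'\<in>insert 0 (Suc ` {..<r}) - {i}. l i' (J i')))"
      unfolding mu_def set_split0 using n0 by (simp add: sum.insert[OF fin n0])
    also have "(\<Sum>i\<in>Suc ` {..<r}. d i (J i) * (\<Prod>i'\<in>insert 0 (Suc ` {..<r}) - {i}. l i' (J i')))
       = (\<Sum>b<r. d (Suc b) (J (Suc b)) * (\<Prod>i'\<in>insert 0 (Suc ` ({..<r} - {b})). l i' (J i')))"
    proof -
      have eqset: "insert 0 (Suc ` {..<r}) - {Suc x} = insert 0 (Suc ` ({..<r} - {x}))" for x
        by auto
      show ?thesis by (subst sum.reindex) (auto simp: eqset)
    qed
    also have "\<dots> = (\<Sum>b<r. l 0 (J 0) * d (Suc b) (J (Suc b)) * (\<Prod>a\<in>{..<r}-{b}. l (Suc a) (J (Suc a))))"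
      by (rule sum.cong) (auto simp: prod.insert prod_Suc_img)
    finally show ?thesis by (simp add: prod_Suc_img)
  qed
  finally show ?thesis .
qed

lemma comp_ii:
  assumes i0: "1 \<le> i0" "i0 \<le> r" and nz: "\<forall>i\<in>{1..r}. l i (J i) \<noteq> 0"
  shows "det (H r l d (\<lambda>b. if b < r then Fc (b+1) (J (b+1)) else Fc i0 j'))
       = nu l d i0 (J i0) j' * (\<Prod>i\<in>{0..r}-{i0,0}. l i (J i))"
proof -
  let ?M = "H r l d (\<lambda>b. if b < r then Fc (b+1) (J (b+1)) else Fc i0 j')"
  have "det ?M = ?M $$ (r,r) * (\<Prod>a<r. ?M $$ (a,a))
     - (\<Sum>b<r. ?M $$ (b,r) * ?M $$ (r,b) * (\<Prod>a\<in>{..<r}-{b}. ?M $$ (a,a)))"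
    by (rule det_bordered) (use nz in \<open>auto simp: H_def\<close>)
  also have "\<dots> = d i0 j' * (\<Prod>a<r. l (Suc a) (J (Suc a)))
     - (\<Sum>b<r. (if Suc b = i0 then l i0 j' * d i0 (J i0) * (\<Prod>a\<in>{..<r}-{b}. l (Suc a) (J (Suc a))) else 0))"
  proof -
    have diag: "?M $$ (a,a) = l (Suc a) (J (Suc a))" if "a < r" for a using that by (simp add: H_def)
    have col: "?M $$ (b,r) = (if Suc b = i0 then l i0 j' else 0)" if "b < r" for b using that i0 by (simp add: H_def)
    have row: "?M $$ (r,b) = d (Suc b) (J (Suc b))" if "b < r" for b using that by (simp add: H_def)
    have rr: "?M $$ (r,r) = d i0 j'" by (simp add: H_def)
    have p1: "(\<Prod>a<r. ?M $$ (a,a)) = (\<Prod>a<r. l (Suc a) (J (Suc a)))"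
      by (rule prod.cong) (auto simp: diag)
    have p2: "(\<Prod>a\<in>{..<r}-{b}. ?M $$ (a,a)) = (\<Prod>a\<in>{..<r}-{b}. l (Suc a) (J (Suc a)))" for b
      by (rule prod.cong) (auto simp: diag)
    have s1: "(\<Sum>b<r. ?M $$ (b,r) * ?M $$ (r,b) * (\<Prod>a\<in>{..<r}-{b}. ?M $$ (a,a))) =
      (\<Sum>b<r. (if Suc b = i0 then l i0 j' * d i0 (J i0) * (\<Prod>a\<in>{..<r}-{b}. l (Suc a) (J (Suc a))) else 0))"
      by (rule sum.cong) (auto simp: col row p2)
    show ?thesis unfolding s1 p1 rr ..
  qed
  also have "\<dots> = d i0 j' * (\<Prod>a<r. l (Suc a) (J (Suc a)))
     - l i0 j' * d i0 (J i0) * (\<Prod>a\<in>{..<r}-{i0-1}. l (Suc a) (J (Suc a)))"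
  proof -
    have "(\<Sum>b<r. (if Suc b = i0 then l i0 j' * d i0 (J i0) * (\<Prod>a\<in>{..<r}-{b}. l (Suc a) (J (Suc a))) else 0))
      = (\<Sum>b<r. (if b = i0 - 1 then l i0 j' * d i0 (J i0) * (\<Prod>a\<in>{..<r}-{b}. l (Suc a) (J (Suc a))) else 0))"
      by (rule sum.cong) (use i0 in auto)
    also have "\<dots> = l i0 j' * d i0 (J i0) * (\<Prod>a\<in>{..<r}-{i0-1}. l (Suc a) (J (Suc a)))"
      using i0 by (simp add: sum.delta')
    finally show ?thesis by simp
  qed
  also have "(\<Prod>a<r. l (Suc a) (J (Suc a))) = l i0 (J i0) * (\<Prod>a\<in>{..<r}-{i0-1}. l (Suc a) (J (Suc a)))"
    using i0 by (subst prod.remove[of _ "i0-1"]) auto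
  also have "(\<Prod>a\<in>{..<r}-{i0-1}. l (Suc a) (J (Suc a))) = (\<Prod>i\<in>{0..r}-{i0,0}. l i (J i))"
  proof -
    have "{0..r}-{i0,0} = Suc ` ({..<r}-{i0-1})"
    proof (rule Set.set_eqI)
      fix x show "x \<in> {0..r}-{i0,0} \<longleftrightarrow> x \<in> Suc ` ({..<r}-{i0-1})"
        using i0 by (cases x) (auto simp: inj_image_mem_iff)
    qed
    thus ?thesis by (simp add: prod_Suc_img)
  qed
  finally show ?thesis by (simp add: nu_def algebra_simps)
qed







lemma det_permute_cols:
  assumes M: "(M :: 'a :: comm_ring_1 mat) \<in> carrier_mat n n" and p: "p permutes {0..<n}"
  shows "det (mat n n (\<lambda>(i,j). M $$ (i, p j))) = signof p * det M"
proof -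
  have "det (mat n n (\<lambda>(i,j). M $$ (i, p j))) = det (transpose_mat (mat n n (\<lambda>(i,j). M $$ (i, p j))))"
    using det_transpose[of "mat n n (\<lambda>(i,j). M $$ (i, p j))" n] by simp
  also have "transpose_mat (mat n n (\<lambda>(i,j). M $$ (i, p j))) = mat n n (\<lambda>(i,j). transpose_mat M $$ (p i, j))"
    by (rule eq_matI) (use M permutes_in_image[OF p] in \<open>simp_all add: atLeast0LessThan\<close>)
  also have "det \<dots> = signof p * det (transpose_mat M)"
    by (rule det_permute_rows[OF _ p]) (use M in simp)
  also have "det (transpose_mat M) = det M" using det_transpose[OF M] .
  finally show ?thesis .
qed

lemma abs_signof: "\<bar>(sign p :: int) * x\<bar> = \<bar>x\<bar>"
  by (simp add: sign_def abs_mult)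

lemma PA_H: "PA r l d A = H r l d (SOME f. bij_betw f {..<Suc r} A)"
  unfolding PA_def H_def Let_def by simp

lemma abs_det_PA:
  assumes g: "bij_betw g {..<Suc r} A"
  shows "\<bar>det (PA r l d A)\<bar> = \<bar>det (H r l d g)\<bar>"
proof -
  define f where "f = (SOME f. bij_betw f {..<Suc r} A)"
  have f: "bij_betw f {..<Suc r} A" unfolding f_def by (rule someI[of _ g], rule g)
  define p where "p = (\<lambda>b. if b < Suc r then inv_into {..<Suc r} f (g b) else b)"
  have "bij_betw (inv_into {..<Suc r} f \<circ> g) {..<Suc r} {..<Suc r}"
    by (rule bij_betw_trans[OF g bij_betw_inv_into[OF f]])
  hence "bij_betw p {..<Suc r} {..<Suc r}"
    by (rule bij_betw_cong[THEN iffD1, rotated], auto simp: p_def)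
  hence pp: "p permutes {0..<Suc r}"
    by (intro bij_imp_permutes) (auto simp: p_def atLeast0LessThan)
  have fp: "f (p b) = g b" if "b < Suc r" for b
    using that f g unfolding p_def
    by (auto intro!: f_inv_into_f simp: bij_betw_def)
  have "H r l d g = mat (Suc r) (Suc r) (\<lambda>(i,j). H r l d f $$ (i, p j))"
    unfolding H_def using permutes_in_image[OF pp] fp by (auto intro!: eq_matI)
  also have "det \<dots> = signof p * det (H r l d f)"
    by (rule det_permute_cols[OF _ pp]) (simp add: H_def)
  finally have "det (H r l d g) = sign p * det (H r l d f)" by simp
  moreover have "PA r l d A = H r l d f" unfolding PA_H f_def ..
  ultimately show ?thesis by (simp add: abs_mult sign_def)
qed





definition sg :: "nat \<Rightarrow> nat \<Rightarrow> nat" where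
  "sg k i = (if i = 0 then k else if i = k then 0 else i)"

fun swc :: "nat \<Rightarrow> col \<Rightarrow> col" where
  "swc k (Fc i j) = Fc (sg k i) j"
| "swc k x = x"

lemma sg_sg[simp]: "sg k (sg k i) = i" by (simp add: sg_def)
lemma swc_swc[simp]: "swc k (swc k x) = x" by (cases x) auto

definition Tm :: "nat \<Rightarrow> nat \<Rightarrow> int mat" where
  "Tm r k = mat (Suc r) (Suc r) (\<lambda>(a,c). if c = k-1 then (if a = r then 0 else -1) else (if a = c then 1 else 0))"

lemma Tm_sum:
  assumes k: "1 \<le> k" "k \<le> r" and a: "a < Suc r"
  shows "(\<Sum>c\<in>{0..<Suc r}. Tm r k $$ (a,c) * X c) =
    (if a = k-1 then - X (k-1) else if a = r then X r else X a - X (k-1))"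
proof -
  have km: "k - 1 \<in> {0..<Suc r}" using k by auto
  have "(\<Sum>c\<in>{0..<Suc r}. Tm r k $$ (a,c) * X c) =
     Tm r k $$ (a,k-1) * X (k-1) + (\<Sum>c\<in>{0..<Suc r} - {k-1}. Tm r k $$ (a,c) * X c)"
    by (rule sum.remove[OF _ km]) simp
  also have "(\<Sum>c\<in>{0..<Suc r} - {k-1}. Tm r k $$ (a,c) * X c) =
      (\<Sum>c\<in>{0..<Suc r} - {k-1}. (if c = a then X a else 0))"
    by (rule sum.cong) (use a in \<open>auto simp: Tm_def\<close>)
  also have "\<dots> = (if a = k-1 then 0 else X a)"
    using a by (simp add: sum.delta' )
  finally show ?thesis using a k by (auto simp: Tm_def)
qed

lemma Tm_sq: assumes k: "1 \<le> k" "k \<le> r" shows "Tm r k * Tm r k = 1\<^sub>m (Suc r)"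
proof (rule eq_matI)
  fix a b assume a: "a < dim_row (1\<^sub>m (Suc r))" and b: "b < dim_col (1\<^sub>m (Suc r))"
  have "(Tm r k * Tm r k) $$ (a,b) = (\<Sum>c\<in>{0..<Suc r}. Tm r k $$ (a,c) * Tm r k $$ (c,b))"
    using a b by (simp add: Tm_def scalar_prod_def times_mat_def)
  also have "\<dots> = 1\<^sub>m (Suc r) $$ (a,b)"
    using a b k by (subst Tm_sum) (auto simp: Tm_def)
  finally show "(Tm r k * Tm r k) $$ (a,b) = 1\<^sub>m (Suc r) $$ (a,b)" .
qed (auto simp: Tm_def)

lemma det_Tm: assumes k: "1 \<le> k" "k \<le> r" shows "\<bar>det (Tm r k)\<bar> = 1"
proof -
  have "det (Tm r k) * det (Tm r k) = 1"
    using det_mult[of "Tm r k" "Suc r" "Tm r k"] Tm_sq[OF k] by (simp add: Tm_def)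
  thus ?thesis by (metis abs_mult_self_eq zmult_eq_1_iff abs_1 abs_neg_one)
qed

lemma Tm_H:
  assumes k: "1 \<le> k" "k \<le> r" and g: "\<forall>b<Suc r. \<exists>i j. g b = Fc i j"
  shows "Tm r k * H r l d g = H r (\<lambda>i. l (sg k i)) (\<lambda>i. d (sg k i)) (swc k \<circ> g)"
proof (rule eq_matI)
  fix a b assume a: "a < dim_row (H r (\<lambda>i. l (sg k i)) (\<lambda>i. d (sg k i)) (swc k \<circ> g))"
    and b: "b < dim_col (H r (\<lambda>i. l (sg k i)) (\<lambda>i. d (sg k i)) (swc k \<circ> g))"
  obtain i j where gb: "g b = Fc i j" using g b by (auto simp: H_def)
  have "(Tm r k * H r l d g) $$ (a,b) = (\<Sum>c\<in>{0..<Suc r}. Tm r k $$ (a,c) * Pcol r l d (g b) c)"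
    using a b by (simp add: Tm_def H_def scalar_prod_def times_mat_def)
  also have "\<dots> = H r (\<lambda>i. l (sg k i)) (\<lambda>i. d (sg k i)) (swc k \<circ> g) $$ (a,b)"
    using a b k unfolding gb by (subst Tm_sum) (auto simp: H_def gb sg_def)
  finally show "(Tm r k * H r l d g) $$ (a,b) = H r (\<lambda>i. l (sg k i)) (\<lambda>i. d (sg k i)) (swc k \<circ> g) $$ (a,b)" .
qed (auto simp: Tm_def H_def)

lemma det_H_swap:
  assumes k: "1 \<le> k" "k \<le> r" and g: "\<forall>b<Suc r. \<exists>i j. g b = Fc i j"
  shows "\<bar>det (H r (\<lambda>i. l (sg k i)) (\<lambda>i. d (sg k i)) (swc k \<circ> g))\<bar> = \<bar>det (H r l d g)\<bar>"
proof -
  have "det (H r (\<lambda>i. l (sg k i)) (\<lambda>i. d (sg k i)) (swc k \<circ> g)) = det (Tm r k) * det (H r l d g)"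
    unfolding Tm_H[OF k g, symmetric] by (rule det_mult) (auto simp: Tm_def H_def)
  thus ?thesis using det_Tm[OF k] by (simp add: abs_mult)
qed


lemma sg0[simp]: "sg 0 i = i" by (simp add: sg_def)
lemma swc0[simp]: "swc 0 x = x" by (cases x) auto

lemma det_H_swap':
  assumes k: "k \<le> r" and g: "\<forall>b<Suc r. \<exists>i j. g b = Fc i j"
  shows "\<bar>det (H r (\<lambda>i. l (sg k i)) (\<lambda>i. d (sg k i)) (swc k \<circ> g))\<bar> = \<bar>det (H r l d g)\<bar>"
proof (cases "k = 0")
  case True
  have "swc k \<circ> g = g" using True by (simp add: o_def)
  thus ?thesis using True by simp
next
  case False
  thus ?thesis using det_H_swap[of k r g l d] k g by simp
qed

lemma H_row_zero:
  assumes k: "1 \<le> k" "k \<le> r" and g: "\<forall>b<Suc r. \<exists>i j. g b = Fc i j \<and> i \<noteq> 0 \<and> i \<noteq> k"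
  shows "det (H r l d g) = 0"
proof -
  have "det (H r l d g) = (\<Sum>p\<in>{p. p permutes {0..<Suc r}}. signof p * (\<Prod>i=0..<Suc r. H r l d g $$ (i, p i)))"
    by (rule det_def') (simp add: H_def)
  also have "\<dots> = 0"
  proof (rule sum.neutral, intro ballI)
    fix p assume "p \<in> {p. p permutes {0..<Suc r}}"
    hence p: "p permutes {0..<Suc r}" by simp
    have pk: "p (k-1) < Suc r" using permutes_in_image[OF p, of "k-1"] k by auto
    obtain i j where gi: "g (p (k-1)) = Fc i j" "i \<noteq> 0" "i \<noteq> k" using g pk by blast
    have z: "H r l d g $$ (k-1, p (k-1)) = 0" using pk k gi by (simp add: H_def)
    have "(\<Prod>i=0..<Suc r. H r l d g $$ (i, p i)) = 0"
      by (rule prod_zero) (use k z in \<open>auto intro!: bexI[of _ "k-1"]\<close>)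
    thus "signof p * (\<Prod>i=0..<Suc r. H r l d g $$ (i, p i)) = 0" by simp
  qed
  finally show ?thesis .
qed




lemma Fc_in_Fblock: "Fc i j \<in> Fblock n i' \<longleftrightarrow> i = i' \<and> 1 \<le> j \<and> j \<le> n i"
  by (auto simp: Fblock_def)

lemma sg_img: "x \<in> sg k ` S \<longleftrightarrow> sg k x \<in> S"
  by (metis image_eqI imageE sg_sg)

lemma inj_sg: "inj (sg k)"
  by (metis injI sg_sg)

lemma sg_eq0: "sg k i = 0 \<longleftrightarrow> i = k"
  by (auto simp: sg_def)

lemma sg_le: "k \<le> r \<Longrightarrow> i \<le> r \<Longrightarrow> sg k i \<le> r"
  by (auto simp: sg_def)

lemma img_bij:
  assumes "g ` {..<Suc r} = A" "card A = Suc r"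
  shows "bij_betw g {..<Suc r} A"
  unfolding bij_betw_def using assms by (auto intro!: eq_card_imp_inj_on)

lemma setup_facts:
  fixes r :: nat and n :: "nat \<Rightarrow> nat" and F' A :: "col set"
  assumes F': "F' \<subseteq> {Fplus, Fminus}"
    and AF: "A \<subseteq> Fset r n F'"
    and AF': "A \<inter> F' = {}"
  shows "\<forall>x\<in>A. \<exists>i j. x = Fc i j \<and> i \<le> r \<and> 1 \<le> j \<and> j \<le> n i"
proof
  fix x assume x: "x \<in> A"
  hence "x \<in> (\<Union>i\<le>r. Fblock n i)" using AF AF' unfolding Fset_def by blast
  thus "\<exists>i j. x = Fc i j \<and> i \<le> r \<and> 1 \<le> j \<and> j \<le> n i" by (auto simp: Fblock_def)
qed


theorem lemma4p6:
  fixes r :: nat and n :: "nat \<Rightarrow> nat" and l d :: "nat \<Rightarrow> nat \<Rightarrow> int"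
    and F' A :: "col set"
  assumes r: "r \<ge> 1"
    and n: "\<forall>i\<le>r. n i \<ge> 1"
    and lpos: "\<forall>i\<le>r. \<forall>j. 1 \<le> j \<and> j \<le> n i \<longrightarrow> l i j \<ge> 1"
    and cop: "\<forall>i\<le>r. \<forall>j. 1 \<le> j \<and> j \<le> n i \<longrightarrow> gcd (l i j) (d i j) = 1"
    and slopes: "\<forall>i\<le>r. \<forall>j. 1 \<le> j \<and> j < n i \<longrightarrow>
        real_of_int (d i j) / real_of_int (l i j) > real_of_int (d i (j+1)) / real_of_int (l i (j+1))"
    and F': "F' \<subseteq> {Fplus, Fminus}"
    and AF: "A \<subseteq> Fset r n F'"
    and cardA: "card A = r + 1"
    and detA: "det (PA r l d A) \<noteq> 0"
    and AF': "A \<inter> F' = {}"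
  shows "((\<forall>i\<le>r. card (A \<inter> Fblock n i) = 1) \<and>
           (\<exists>j. (\<forall>i\<le>r. 1 \<le> j i \<and> j i \<le> n i) \<and>
                \<bar>det (PA r l d A)\<bar> = \<bar>mu r l d j\<bar>))
       \<or> (\<exists>i0 i1. i0 \<le> r \<and> i1 \<le> r \<and>
           card (A \<inter> Fblock n i0) = 2 \<and> card (A \<inter> Fblock n i1) = 0 \<and>
           (\<forall>i\<le>r. i \<noteq> i0 \<and> i \<noteq> i1 \<longrightarrow> card (A \<inter> Fblock n i) = 1) \<and>
           (\<exists>j j'. (\<forall>i\<le>r. 1 \<le> j i \<and> j i \<le> n i) \<and> 1 \<le> j' \<and> j' \<le> n i0 \<and>
              \<bar>det (PA r l d A)\<bar> =
                \<bar>nu l d i0 (j i0) j'\<bar> * (\<Prod>i\<in>{0..r} - {i0, i1}. l i (j i))))"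
proof -
  define cnt where "cnt i = card (A \<inter> Fblock n i)" for i
  have Aall: "\<forall>x\<in>A. \<exists>i j. x = Fc i j \<and> i \<le> r \<and> 1 \<le> j \<and> j \<le> n i"
    by (rule setup_facts[OF F' AF AF'])
  have cardA': "card A = Suc r" using cardA by simp
  have finA: "finite A" using cardA' by (metis card.infinite nat.distinct(1))
  have Aun: "A = (\<Union>i\<in>{..r}. A \<inter> Fblock n i)"
    using Aall by (auto simp: Fc_in_Fblock)
  have sumcnt: "(\<Sum>i\<in>{..r}. cnt i) = Suc r"
  proof -
    have "card (\<Union>i\<in>{..r}. A \<inter> Fblock n i) = (\<Sum>i\<in>{..r}. card (A \<inter> Fblock n i))"
      by (rule card_UN_disjoint) (use finA in \<open>auto simp: Fblock_def\<close>)
    thus ?thesis using Aun cardA' unfolding cnt_def by simp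
  qed
  obtain g0 where g0: "bij_betw g0 {..<Suc r} A"
    using ex_bij_betw_nat_finite[OF finA] cardA' by (auto simp: atLeast0LessThan)
  have g0A: "g0 b \<in> A" if "b < Suc r" for b using g0 that by (auto simp: bij_betw_def)
  define J where "J i = (if \<exists>j. Fc i j \<in> A then SOME j. Fc i j \<in> A else 1)" for i
  have JA: "Fc i (J i) \<in> A" if "i \<le> r" "cnt i \<ge> 1" for i
  proof -
    have "A \<inter> Fblock n i \<noteq> {}" using that unfolding cnt_def by (metis card.empty not_one_le_zero)
    then obtain j where "Fc i j \<in> A" by (auto simp: Fblock_def)
    hence "\<exists>j. Fc i j \<in> A" by blast
    thus ?thesis using someI_ex[of "\<lambda>j. Fc i j \<in> A"] unfolding J_def by auto
  qed
  have Jr: "1 \<le> J i \<and> J i \<le> n i" if "i \<le> r" for i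
  proof (cases "\<exists>j. Fc i j \<in> A")
    case True
    hence "Fc i (J i) \<in> A" unfolding J_def using someI_ex[OF True] by simp
    thus ?thesis using Aall by fastforce
  next
    case False thus ?thesis using n that unfolding J_def by simp
  qed
  have lJ: "l i (J i) \<ge> 1" if "i \<le> r" for i using lpos Jr that by blast
  have JB: "Fc i (J i) \<in> Fblock n i" if "i \<le> r" for i using Jr[OF that] by (simp add: Fc_in_Fblock)
  have cnt1: "A \<inter> Fblock n i = {Fc i (J i)}" if ir: "i \<le> r" and ci: "cnt i = 1" for i
  proof -
    obtain x where x: "A \<inter> Fblock n i = {x}" using card_1_singletonE[of "A \<inter> Fblock n i"] ci unfolding cnt_def by blast
    moreover have "Fc i (J i) \<in> A \<inter> Fblock n i" using JA[of i] JB[of i] ir ci by simp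
    ultimately show ?thesis by auto
  qed
  have cnt0: "A \<inter> Fblock n i = {}" if "cnt i = 0" for i
    using that finA unfolding cnt_def by simp
  have Afc: "\<forall>b<Suc r. \<exists>i j. g b = Fc i j" if "g ` {..<Suc r} = A" for g
    using that Aall by blast
  have nozero2: False if k: "k1 \<le> r" "k2 \<le> r" "k1 \<noteq> k2" "k2 \<noteq> 0" "cnt k1 = 0" "cnt k2 = 0" for k1 k2
  proof -
    have gfc: "\<forall>b<Suc r. \<exists>i j. g0 b = Fc i j" using g0A Aall by blast
    have "\<forall>b<Suc r. \<exists>i j. (swc k1 \<circ> g0) b = Fc i j \<and> i \<noteq> 0 \<and> i \<noteq> k2"
    proof (intro allI impI)
      fix b assume b: "b < Suc r"
      obtain i j where ij: "g0 b = Fc i j" "i \<le> r" "1 \<le> j" "j \<le> n i" using Aall g0A[OF b] by blast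
      have "i \<noteq> k1" using cnt0[OF k(5)] ij g0A[OF b] by (auto simp: Fc_in_Fblock)
      moreover have "i \<noteq> k2" using cnt0[OF k(6)] ij g0A[OF b] by (auto simp: Fc_in_Fblock)
      ultimately show "\<exists>i j. (swc k1 \<circ> g0) b = Fc i j \<and> i \<noteq> 0 \<and> i \<noteq> k2"
        using ij k by (auto simp: sg_def)
    qed
    hence "det (H r (\<lambda>i. l (sg k1 i)) (\<lambda>i. d (sg k1 i)) (swc k1 \<circ> g0)) = 0"
      using k by (intro H_row_zero) auto
    hence "det (H r l d g0) = 0" using det_H_swap'[OF k(1) gfc, of l d] by simp
    thus False using abs_det_PA[OF g0, of l d] detA by simp
  qed
  show ?thesis
  proof (cases "\<forall>i\<le>r. cnt i \<ge> 1")
    case True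
    have all1: "cnt i = 1" if "i \<le> r" for i
    proof (rule ccontr)
      assume "cnt i \<noteq> 1"
      hence "cnt i > 1" using True that by fastforce
      hence "(\<Sum>i\<in>{..r}. (1::nat)) < (\<Sum>i\<in>{..r}. cnt i)"
        using True that by (intro sum_strict_mono_ex1) auto
      thus False using sumcnt by simp
    qed
    define g where "g b = (if b < r then Fc (b+1) (J (b+1)) else Fc 0 (J 0))" for b
    have gimg: "g ` {..<Suc r} = A"
    proof
      show "g ` {..<Suc r} \<subseteq> A" using JA True by (auto simp: g_def)
    next
      show "A \<subseteq> g ` {..<Suc r}"
      proof
        fix x assume x: "x \<in> A"
        then obtain i where i: "i \<le> r" "x \<in> A \<inter> Fblock n i" using Aun by blast
        hence xi: "x = Fc i (J i)" using cnt1[OF i(1) all1[OF i(1)]] by simp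
        show "x \<in> g ` {..<Suc r}"
        proof (cases "i = 0")
          case True thus ?thesis using xi by (auto simp: g_def image_iff intro!: bexI[of _ r])
        next
          case False thus ?thesis using xi i(1) by (auto simp: g_def image_iff intro!: bexI[of _ "i-1"])
        qed
      qed
    qed
    have "det (H r l d g) = mu r l d J"
      unfolding g_def by (rule comp_i) (use lJ in \<open>fastforce\<close>)
    hence "\<bar>det (PA r l d A)\<bar> = \<bar>mu r l d J\<bar>"
      using abs_det_PA[OF img_bij[OF gimg cardA']] by simp
    thus ?thesis using all1 Jr unfolding cnt_def by blast
  next
    case False
    then obtain i1 where i1: "i1 \<le> r" "cnt i1 = 0" by (auto simp: not_le)
    have pos: "cnt i \<ge> 1" if "i \<le> r" "i \<noteq> i1" for i
    proof (rule ccontr)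
      assume "\<not> cnt i \<ge> 1"
      hence "cnt i = 0" by simp
      thus False using nozero2[of i i1] nozero2[of i1 i] i1 that by (cases "i1 = 0") auto
    qed
    let ?R = "{..r} - {i1}"
    have finR: "finite ?R" by simp
    have sumR: "(\<Sum>i\<in>?R. cnt i) = Suc r"
      using sumcnt sum.remove[of "{..r}" i1 cnt] i1 by simp
    have cardR: "card ?R = r" using i1 by simp
    obtain i0 where i0: "i0 \<in> ?R" "cnt i0 \<ge> 2"
    proof (rule ccontr)
      assume "\<not> thesis"
      hence "\<forall>i\<in>?R. cnt i \<le> 1" using that by fastforce
      hence "(\<Sum>i\<in>?R. cnt i) \<le> (\<Sum>i\<in>?R. 1)" by (intro sum_mono) auto
      thus False using sumR cardR by simp
    qed
    define h where "h i = (if i = i0 then 2 else (1::nat))" for i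
    have sumh: "(\<Sum>i\<in>?R. h i) = Suc r"
    proof -
      have "(\<Sum>i\<in>?R. h i) = h i0 + (\<Sum>i\<in>?R - {i0}. h i)"
        using sum.remove[OF finR i0(1)] by simp
      also have "(\<Sum>i\<in>?R - {i0}. h i) = (\<Sum>i\<in>?R - {i0}. 1)"
        by (rule sum.cong) (auto simp: h_def)
      also have "\<dots> = r - 1" using i0(1) cardR by simp
      finally show ?thesis using r by (simp add: h_def)
    qed
    have exact: "cnt i = h i" if "i \<in> ?R" for i
    proof (rule ccontr)
      assume ne: "cnt i \<noteq> h i"
      have ge: "\<forall>i\<in>?R. h i \<le> cnt i" using pos i0 by (auto simp: h_def)
      hence "(\<Sum>i\<in>?R. h i) < (\<Sum>i\<in>?R. cnt i)"
        using ne that by (intro sum_strict_mono_ex1[OF finR]) (auto intro!: bexI[of _ i] simp: le_neq_implies_less)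
      thus False using sumh sumR by simp
    qed
    have i0r: "i0 \<le> r" "i0 \<noteq> i1" using i0 by auto
    have c0: "cnt i0 = 2" using exact[OF i0(1)] by (simp add: h_def)
    have cothers: "cnt i = 1" if "i \<le> r" "i \<noteq> i0" "i \<noteq> i1" for i
      using exact[of i] that by (simp add: h_def)
    obtain j' where j': "Fc i0 j' \<in> A" "j' \<noteq> J i0" "1 \<le> j'" "j' \<le> n i0"
      and B0: "A \<inter> Fblock n i0 = {Fc i0 (J i0), Fc i0 j'}"
    proof -
      have fin0: "finite (A \<inter> Fblock n i0)" using finA by simp
      have inJ: "Fc i0 (J i0) \<in> A \<inter> Fblock n i0" using JA[OF i0r(1)] JB[OF i0r(1)] c0 by simp
      have "card (A \<inter> Fblock n i0 - {Fc i0 (J i0)}) = 1"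
        using c0 inJ fin0 unfolding cnt_def by simp
      then obtain y where y: "A \<inter> Fblock n i0 - {Fc i0 (J i0)} = {y}" by (rule card_1_singletonE)
      hence yA: "y \<in> A \<inter> Fblock n i0" "y \<noteq> Fc i0 (J i0)" by auto
      then obtain jy where "y = Fc i0 jy" "1 \<le> jy" "jy \<le> n i0" by (auto simp: Fblock_def)
      moreover have "A \<inter> Fblock n i0 = {Fc i0 (J i0), y}" using y inJ by auto
      ultimately show thesis using that yA by auto
    qed
    define \<sigma> where "\<sigma> = sg i1"
    define l' where "l' i = l (\<sigma> i)" for i
    define d' where "d' i = d (\<sigma> i)" for i
    define J' where "J' i = J (\<sigma> i)" for i
    define g' where "g' b = (if b < r then Fc (b+1) (J' (b+1)) else Fc (\<sigma> i0) j')" for b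
    define g where "g = swc i1 \<circ> g'"
    have \<sigma>\<sigma>: "\<sigma> (\<sigma> x) = x" for x by (simp add: \<sigma>_def)
    have \<sigma>0: "\<sigma> x = 0 \<longleftrightarrow> x = i1" for x by (simp add: \<sigma>_def sg_eq0)
    have \<sigma>r: "\<sigma> x \<le> r" if "x \<le> r" for x using that i1 by (simp add: \<sigma>_def sg_le)
    have gb: "g b = (if b < r then Fc (\<sigma> (b+1)) (J (\<sigma> (b+1))) else Fc i0 j')" for b
      by (simp add: g_def g'_def J'_def \<sigma>\<sigma> \<sigma>_def[symmetric])
    have hit: "Fc i (J i) = g (\<sigma> i - 1)" "\<sigma> i - 1 < r" if "i \<le> r" "i \<noteq> i1" for i
    proof -
      have "\<sigma> i \<noteq> 0" using \<sigma>0 that by simp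
      moreover have "\<sigma> i \<le> r" using \<sigma>r that by simp
      ultimately show "\<sigma> i - 1 < r" "Fc i (J i) = g (\<sigma> i - 1)" using gb \<sigma>\<sigma> by auto
    qed
    have gimg: "g ` {..<Suc r} = A"
    proof
      show "g ` {..<Suc r} \<subseteq> A"
      proof
        fix x assume "x \<in> g ` {..<Suc r}"
        then obtain b where b: "b < Suc r" "x = g b" by auto
        show "x \<in> A"
        proof (cases "b < r")
          case True
          have "\<sigma> (b+1) \<le> r" using \<sigma>r True by simp
          moreover have "\<sigma> (b+1) \<noteq> i1" using \<sigma>0 \<sigma>\<sigma> by (metis add_eq_0_iff_both_eq_0 zero_neq_one)
          ultimately show ?thesis using b True gb JA pos by simp
        next
          case False thus ?thesis using b gb j' by simp
        qed
      qed
    next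
      show "A \<subseteq> g ` {..<Suc r}"
      proof
        fix x assume x: "x \<in> A"
        then obtain i where i: "i \<le> r" "x \<in> A \<inter> Fblock n i" using Aun by blast
        have ii1: "i \<noteq> i1" using i cnt0[OF i1(2)] by auto
        show "x \<in> g ` {..<Suc r}"
        proof (cases "i = i0")
          case True
          hence "x = Fc i0 (J i0) \<or> x = Fc i0 j'" using i B0 by auto
          thus ?thesis
          proof
            assume "x = Fc i0 (J i0)"
            thus ?thesis using hit[OF i0r] by auto
          next
            assume "x = Fc i0 j'"
            thus ?thesis using gb by (auto intro!: image_eqI[of _ _ r])
          qed
        next
          case False
          hence "x = Fc i (J i)" using cnt1[OF i(1) cothers[OF i(1) False ii1]] i by simp
          thus ?thesis using hit[OF i(1) ii1] by auto
        qed
      qed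
    qed
    have gfc: "\<forall>b<Suc r. \<exists>i j. g b = Fc i j" using gb by simp
    have swg: "swc i1 \<circ> g = g'" by (simp add: g_def o_def)
    have i0': "1 \<le> \<sigma> i0" "\<sigma> i0 \<le> r" using \<sigma>0 \<sigma>r i0r by (auto simp: Suc_le_eq)
    have nz: "\<forall>i\<in>{1..r}. l' i (J' i) \<noteq> 0"
    proof
      fix i assume "i \<in> {1..r}"
      hence "\<sigma> i \<le> r" using \<sigma>r by simp
      thus "l' i (J' i) \<noteq> 0" using lJ unfolding l'_def J'_def by fastforce
    qed
    have "\<bar>det (PA r l d A)\<bar> = \<bar>det (H r l d g)\<bar>"
      by (rule abs_det_PA[OF img_bij[OF gimg cardA']])
    also have "\<dots> = \<bar>det (H r l' d' g')\<bar>"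
      using det_H_swap'[OF i1(1) gfc, of l d] unfolding swg l'_def[abs_def] d'_def[abs_def] \<sigma>_def by simp
    also have "det (H r l' d' g') = nu l' d' (\<sigma> i0) (J' (\<sigma> i0)) j' * (\<Prod>i\<in>{0..r}-{\<sigma> i0,0}. l' i (J' i))"
      unfolding g'_def by (rule comp_ii[of "\<sigma> i0" r l' J' d' j', OF i0' nz])
    also have "nu l' d' (\<sigma> i0) (J' (\<sigma> i0)) j' = nu l d i0 (J i0) j'"
      by (simp add: nu_def l'_def d'_def J'_def \<sigma>\<sigma>)
    also have "(\<Prod>i\<in>{0..r}-{\<sigma> i0,0}. l' i (J' i)) = (\<Prod>i\<in>{0..r}-{i0,i1}. l i (J i))"
    proof -
      have "(\<Prod>i\<in>{0..r}-{\<sigma> i0,0}. l' i (J' i)) = (\<Prod>i\<in>\<sigma> ` ({0..r}-{\<sigma> i0,0}). l i (J i))"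
        unfolding \<sigma>_def l'_def J'_def by (subst prod.reindex) (auto intro: inj_on_subset[OF inj_sg])
      also have "\<sigma> ` ({0..r}-{\<sigma> i0,0}) = {0..r}-{i0,i1}"
      proof (rule Set.set_eqI)
        fix x
        have "x \<in> \<sigma> ` ({0..r}-{\<sigma> i0,0}) \<longleftrightarrow> \<sigma> x \<in> {0..r}-{\<sigma> i0,0}"
          unfolding \<sigma>_def by (rule sg_img)
        also have "\<dots> \<longleftrightarrow> x \<in> {0..r}-{i0,i1}"
          using \<sigma>r \<sigma>0 \<sigma>\<sigma> by (metis Diff_iff atLeastAtMost_iff insert_iff le0 singletonD)
        finally show "x \<in> \<sigma> ` ({0..r}-{\<sigma> i0,0}) \<longleftrightarrow> x \<in> {0..r}-{i0,i1}" .
      qed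
      finally show ?thesis .
    qed
    finally have detv: "\<bar>det (PA r l d A)\<bar> = \<bar>nu l d i0 (J i0) j' * (\<Prod>i\<in>{0..r}-{i0,i1}. l i (J i))\<bar>" .
    have "(\<Prod>i\<in>{0..r}-{i0,i1}. l i (J i)) \<ge> 0"
      by (rule prod_nonneg) (use lJ in \<open>fastforce\<close>)
    hence detv': "\<bar>det (PA r l d A)\<bar> = \<bar>nu l d i0 (J i0) j'\<bar> * (\<Prod>i\<in>{0..r}-{i0,i1}. l i (J i))"
      using detv by (simp add: abs_mult)
    show ?thesis
      apply (rule disjI2)
      apply (rule exI[of _ i0], rule exI[of _ i1])
      using i0r i1 c0 cothers Jr j' detv' unfolding cnt_def by blast
  qed
qed


end
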